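(* Consider an incentive-compatible design $\mathcal{D}=(\psi,\phi)$ under no interference, where each action set $\mathcal{A}_i\subseteq\mathbb{R}$ is compact and the performance function $\chi$ is continuous and one-to-one. Suppose that for every fixed action profile and every agent $i$, $\sqrt{k}(\phi_i(Y^{obs})-\chi(A_i))\xrightarrow{D}\mathcal{N}(0,\sigma^2(A_i))$ (independently across agents), where $\sigma^2:\mathcal{A}\to(0,\infty)$ satisfies $\chi(\alpha')\ge\chi(\alpha)\Rightarrow\sigma^2(\alpha')\ge\sigma^2(\alpha)$ for all agents $i$ and all $\alpha,\alpha'\in\mathcal{A}_i$. Define $$\nu(y)=\int^{y}\frac{1}{\sqrt{\sigma^2(\chi^{-1}(z))}}\,dz$$ and the design $\mathcal{D}'=(\psi,\phi')$ with $\phi'_i(Y^{obs})=\nu(\phi_i(Y^{obs}))$. If either $\nu$ is convex, or both $z\mapsto 1/\sqrt{\sigma^2(\chi^{-1}(z))}$ and $z\mapsto\sigma^2(\chi^{-1}(z))$ are convex, then $\mathcal{D}'$ is incentive-compatible and more powerful than $\mathcal{D}$; specifically, for any agents $i,j$ and actions with $\chi_i:=\chi(A_i)\ge\chi_j:=\chi(A_j)$, writing $\sigma_i^2=\sigma^2(A_i)$, $\sigma_j^2=\sigma^2(A_j)$, $$\Phi\Big(\sqrt{k/2}\,\big(\nu(\chi_i)-\nu(\chi_j)\big)\Big)\;\ge\;\Phi\Big(\sqrt{k}\,\frac{\chi_i-\chi_j}{\sqrt{\sigma_i^2+\sigma_j^2}}\Big),$$ i.e. the asymptotic probability that the better agent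 beats the other is at least as large under $\mathcal{D}'$ as under $\mathcal{D}$.
   Context: Setting: $n$ agents, $m$ units, complete randomization (assignment rule $\psi$) with $k=m/n$ units per agent; agent $i$ chooses action $A_i\in\mathcal{A}_i$; observed outcomes $Y^{obs}\in\mathbb{R}^m$; performance function $\chi:\mathcal{A}\to\mathbb{R}$; natural action $A_i^\star=\arg\max_{\alpha\in\mathcal{A}_i}\chi(\alpha)$. A design $\mathcal{D}=(\psi,\phi)$ has score $\phi:\mathbb{R}^m\to\mathbb{R}^n$ and winner $\arg\max_i\phi_i$. No interference: a unit's outcome when assigned to agent $i$ depends only on $A_i$. $\Phi$ is the standard normal CDF. Asymptotic incentive compatibility: if $\sqrt{k}(\phi(Y^{obs})-\mu(\mathbf{A}))\to\mathcal{N}(0,V(\mathbf{A}))$, the probability that agent $i$'s score exceeds agent $j$'s is approximated by $\Phi(\sqrt{k}(\mu_i-\mu_j)/(v_{ii}+v_{jj}-v_{ij}-v_{ji})^{1/2})$, and the design is incentive-compatible if for every $i$, $j\neq i$ and actions of the others, $A_i^\star$ maximizes this approximate probability over $\alpha\in\mathcal{A}_i$. A design $\mathcal{D}'$ is more powerful than $\mathcal{D}$ (both incentive-compatible) if the probability that the highest-quality agent wins at the natural action profile is at least as large under $\mathcal{D}'$ as under $\mathcal{D}$. *)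

theory Defs
  imports "HOL-Probability.Probability"
begin

definition Phi :: "real \<Rightarrow> real" where
  "Phi x = measure std_normal_distribution {..x}"

definition gauss :: "real \<Rightarrow> real measure" where
  "gauss v = (if 0 < v then density lborel (normal_density 0 (sqrt v)) else return borel 0)"

text \<open>A design is represented by the law of its score vector phi(Y^obs):
  L A k is the distribution on ('n \<Rightarrow> real) of the scores when the agents play the
  action profile A and each agent receives k units.
  Asymptotic normality: sqrt k (phi - mu A) converges in distribution to N(0, V A),
  for every admissible action profile; stated via Cramer-Wold (all linear combinations).\<close>
definition admissible :: "('n \<Rightarrow> real set) \<Rightarrow> ('n \<Rightarrow> real) \<Rightarrow> bool" where
  "admissible As A \<longleftrightarrow> (\<forall>l. A l \<in> As l)"

definition asym_normal ::
  "('n::finite \<Rightarrow> real set) \<Rightarrow> (('n \<Rightarrow> real) \<Rightarrow> nat \<Rightarrow> ('n \<Rightarrow> real) measure)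
   \<Rightarrow> (('n \<Rightarrow> real) \<Rightarrow> 'n \<Rightarrow> real) \<Rightarrow> (('n \<Rightarrow> real) \<Rightarrow> 'n \<Rightarrow> 'n \<Rightarrow> real) \<Rightarrow> bool" where
  "asym_normal As L mu V \<longleftrightarrow>
     (\<forall>A. admissible As A \<longrightarrow> (\<forall>c :: 'n \<Rightarrow> real.
        weak_conv_m (\<lambda>k. distr (L A k) borel (\<lambda>s. sqrt (real k) * (\<Sum>i\<in>UNIV. c i * (s i - mu A i))))
                    (gauss (\<Sum>i\<in>UNIV. \<Sum>j\<in>UNIV. c i * c j * V A i j))))"

text \<open>Approximate probability that agent i's score exceeds agent j's.\<close>
definition approx_win ::
  "nat \<Rightarrow> ('n \<Rightarrow> real) \<Rightarrow> ('n \<Rightarrow> 'n \<Rightarrow> real) \<Rightarrow> 'n \<Rightarrow> 'n \<Rightarrow> real" where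
  "approx_win k mu V i j =
     Phi (sqrt (real k) * (mu i - mu j) / sqrt (V i i + V j j - V i j - V j i))"

definition natural_action :: "('n \<Rightarrow> real set) \<Rightarrow> (real \<Rightarrow> real) \<Rightarrow> 'n \<Rightarrow> real \<Rightarrow> bool" where
  "natural_action As chi i a \<longleftrightarrow> a \<in> As i \<and> (\<forall>b \<in> As i. chi b \<le> chi a)"

definition design_IC ::
  "('n::finite \<Rightarrow> real set) \<Rightarrow> (real \<Rightarrow> real) \<Rightarrow> (('n \<Rightarrow> real) \<Rightarrow> nat \<Rightarrow> ('n \<Rightarrow> real) measure) \<Rightarrow> bool" where
  "design_IC As chi L \<longleftrightarrow>
     (\<exists>mu V. asym_normal As L mu V \<and>
        (\<forall>k>0. \<forall>i j. i \<noteq> j \<longrightarrow> (\<forall>A. admissible As A \<longrightarrow>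
           (\<forall>a\<^sub>0. natural_action As chi i a\<^sub>0 \<longrightarrow> (\<forall>\<alpha> \<in> As i.
              approx_win k (mu (A(i := \<alpha>))) (V (A(i := \<alpha>))) i j
                \<le> approx_win k (mu (A(i := a\<^sub>0))) (V (A(i := a\<^sub>0))) i j)))))"

definition transform_design ::
  "(real \<Rightarrow> real) \<Rightarrow> (('n \<Rightarrow> real) \<Rightarrow> nat \<Rightarrow> ('n \<Rightarrow> real) measure)
   \<Rightarrow> ('n \<Rightarrow> real) \<Rightarrow> nat \<Rightarrow> ('n \<Rightarrow> real) measure" where
  "transform_design nu L A k = distr (L A k) (Pi\<^sub>M UNIV (\<lambda>_. borel)) (\<lambda>s i. nu (s i))"

end

theory Submission
  imports Defs
begin

lemma Phi_mono: "x \<le> y \<Longrightarrow> Phi x \<le> Phi y"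
proof -
  assume "x \<le> y"
  interpret prob_space "density lborel std_normal_density"
    by (rule prob_space_normal_density) simp
  show ?thesis unfolding Phi_def
    by (rule finite_measure_mono) (use \<open>x \<le> y\<close> in auto)
qed

lemma tangent_left:
  fixes f :: "real \<Rightarrow> real"
  assumes conv: "convex_on {c..x} f" and cx: "c < x"
    and deriv: "(f has_real_derivative f') (at c)"
  shows "f' * (x - c) \<le> f x - f c"
proof -
  have lim: "((\<lambda>y. (f y - f c) / (y - c)) \<longlongrightarrow> f') (at_right c)"
    using deriv unfolding has_field_derivative_iff
    by (rule tendsto_mono[rotated]) (simp add: at_le)
  have ev: "eventually (\<lambda>y. (f y - f c) / (y - c) \<le> (f x - f c) / (x - c)) (at_right c)"
    using eventually_at_right_real[OF cx]
  proof eventually_elim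
    fix y assume y: "y \<in> {c<..<x}"
    have "f y \<le> (f x - f c) / (x - c) * (y - c) + f c"
      using convex_onD_Icc'[OF conv, of y] y by auto
    hence "f y - f c \<le> (f x - f c) / (x - c) * (y - c)" by simp
    thus "(f y - f c) / (y - c) \<le> (f x - f c) / (x - c)"
      using y by (simp add: divide_simps mult.commute)
  qed
  have "f' \<le> (f x - f c) / (x - c)"
    using tendsto_upperbound[OF lim ev] by (simp add: trivial_limit_at_right_real)
  thus ?thesis using cx by (simp add: field_simps)
qed

lemma gauss_rd:
  assumes "v > 0" shows "real_distribution (gauss v)"
proof -
  have "prob_space (gauss v)" using assms by (simp add: gauss_def prob_space_normal_density)
  moreover have "sets (gauss v) = sets borel" using assms by (simp add: gauss_def)
  ultimately show ?thesis by (simp add: real_distribution_def real_distribution_axioms_def)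
qed

lemma gauss_cont:
  assumes "v > 0" shows "isCont (cdf (gauss v)) x"
proof -
  interpret real_distribution "gauss v" by (rule gauss_rd[OF assms])
  have "emeasure (gauss v) {x} = 0"
    using assms unfolding gauss_def
    by (simp add: emeasure_density nn_integral_null_set)
  then show ?thesis by (simp add: isCont_cdf measure_def)
qed

lemma cdf_distr:
  assumes "f \<in> borel_measurable M"
  shows "cdf (distr M borel f) x = measure M {s\<in>space M. f s \<le> x}"
  unfolding cdf_def using assms
  by (subst measure_distr) (auto intro!: arg_cong[where f="measure M"])



lemma meas_cover2:
  assumes "prob_space N" "A \<in> sets N" "B \<in> sets N" "C \<in> sets N" "A \<subseteq> B \<union> C"
  shows "measure N A \<le> measure N B + measure N C"
proof -
  interpret prob_space N by fact
  have "measure N A \<le> measure N (B \<union> C)" using assms by (intro finite_measure_mono) auto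
  also have "\<dots> \<le> measure N B + measure N C" using assms by (intro measure_Un_le) auto
  finally show ?thesis .
qed

lemma slutsky:
  fixes M :: "nat \<Rightarrow> 'a measure" and f g :: "nat \<Rightarrow> 'a \<Rightarrow> real"
  assumes prob: "\<And>k. prob_space (M k)"
    and fm: "\<And>k. f k \<in> borel_measurable (M k)"
    and gm: "\<And>k. g k \<in> borel_measurable (M k)"
    and conv: "weak_conv_m (\<lambda>k. distr (M k) borel (f k)) G"
    and cont: "\<And>x. isCont (cdf G) x"
    and small: "\<And>e. e > 0 \<Longrightarrow> (\<lambda>k. measure (M k) {s\<in>space (M k). e < \<bar>g k s - f k s\<bar>}) \<longlonglongrightarrow> 0"
  shows "weak_conv_m (\<lambda>k. distr (M k) borel (g k)) G"
  unfolding weak_conv_m_def weak_conv_def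
proof (intro allI impI)
  fix x
  note [measurable] = fm gm
  define F where "F = cdf G"
  define Fk where "Fk k t = measure (M k) {s\<in>space (M k). f k s \<le> t}" for k t
  define Gk where "Gk k = measure (M k) {s\<in>space (M k). g k s \<le> x}" for k
  define p where "p k e = measure (M k) {s\<in>space (M k). e < \<bar>g k s - f k s\<bar>}" for k e
  have Fconv: "(\<lambda>k. Fk k t) \<longlonglongrightarrow> F t" for t
    using conv cont[of t] unfolding weak_conv_m_def weak_conv_def Fk_def F_def
    by (simp add: cdf_distr fm)
  have "(\<lambda>k. Gk k) \<longlonglongrightarrow> F x"
  proof (rule tendstoI)
    fix \<gamma> :: real assume \<gamma>: "\<gamma> > 0"
    have "\<exists>d>0. \<forall>y. dist y x < d \<longrightarrow> dist (F y) (F x) < \<gamma>/3"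
      using cont[of x] \<gamma> unfolding F_def continuous_at_eps_delta
      by (meson divide_pos_pos zero_less_numeral)
    then obtain d where d: "d > 0" "\<And>y. dist y x < d \<Longrightarrow> dist (F y) (F x) < \<gamma>/3" by blast
    define e where "e = d/2"
    have e: "e > 0" using d by (simp add: e_def)
    have Fp: "\<bar>F (x+e) - F x\<bar> < \<gamma>/3" using d(2)[of "x+e"] d by (simp add: e_def dist_real_def)
    have Fm: "\<bar>F (x-e) - F x\<bar> < \<gamma>/3" using d(2)[of "x-e"] d by (simp add: e_def dist_real_def)
    have ev1: "eventually (\<lambda>k. dist (Fk k (x+e)) (F (x+e)) < \<gamma>/3) sequentially"
      using Fconv[of "x+e"] \<gamma> by (intro tendstoD) auto
    have ev2: "eventually (\<lambda>k. dist (Fk k (x-e)) (F (x-e)) < \<gamma>/3) sequentially"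
      using Fconv[of "x-e"] \<gamma> by (intro tendstoD) auto
    have ev3: "eventually (\<lambda>k. dist (p k e) 0 < \<gamma>/3) sequentially"
      using small[OF e] \<gamma> unfolding p_def by (intro tendstoD) auto
    have up: "Gk k \<le> Fk k (x+e) + p k e" for k
      unfolding Gk_def Fk_def p_def
      by (rule meas_cover2[OF prob]) (auto)
    have lo: "Fk k (x-e) \<le> Gk k + p k e" for k
      unfolding Gk_def Fk_def p_def
      by (rule meas_cover2[OF prob]) (auto)
    have pnn: "p k e \<ge> 0" for k unfolding p_def by simp
    show "eventually (\<lambda>k. dist (Gk k) (F x) < \<gamma>) sequentially"
      using ev1 ev2 ev3
    proof eventually_elim
      case (elim k)
      then show ?case using up[of k] lo[of k] Fp Fm pnn[of k]
        unfolding dist_real_def by arith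
    qed
  qed
  then show "(\<lambda>n. cdf (distr (M n) borel (g n)) x) \<longlonglongrightarrow> cdf G x"
    by (simp add: cdf_distr gm Gk_def F_def)
qed



lemma deriv_approx:
  assumes deriv: "(nu has_real_derivative d) (at z)" and th: "\<theta> > 0"
  shows "\<exists>\<delta>>0. \<forall>y. \<bar>y - z\<bar> < \<delta> \<longrightarrow> \<bar>nu y - nu z - d * (y - z)\<bar> \<le> \<theta> * \<bar>y - z\<bar>"
proof -
  have "((\<lambda>y. (nu y - nu z) / (y - z)) \<longlongrightarrow> d) (at z)"
    using deriv unfolding has_field_derivative_iff .
  then have "eventually (\<lambda>y. dist ((nu y - nu z) / (y - z)) d < \<theta>) (at z)"
    using th by (rule tendstoD)
  then obtain \<delta> where \<delta>: "\<delta> > 0" "\<And>y. y \<noteq> z \<Longrightarrow> dist y z < \<delta> \<Longrightarrow> dist ((nu y - nu z) / (y - z)) d < \<theta>"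
    unfolding eventually_at by auto
  have "\<bar>nu y - nu z - d * (y - z)\<bar> \<le> \<theta> * \<bar>y - z\<bar>" if "\<bar>y - z\<bar> < \<delta>" for y
  proof (cases "y = z")
    case False
    have eq: "nu y - nu z - d * (y - z) = ((nu y - nu z) / (y - z) - d) * (y - z)"
      using False by (simp add: field_simps)
    have "\<bar>(nu y - nu z) / (y - z) - d\<bar> < \<theta>" using \<delta>(2)[OF False] that by (simp add: dist_real_def)
    then show ?thesis unfolding eq abs_mult
      by (intro mult_right_mono) auto
  qed simp
  then show ?thesis using \<delta>(1) by blast
qed

lemma remainder_small:
  fixes M :: "nat \<Rightarrow> 'a measure" and X :: "nat \<Rightarrow> 'a \<Rightarrow> real"
  assumes prob: "\<And>k. prob_space (M k)"
    and Xm: "\<And>k. X k \<in> borel_measurable (M k)"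
    and numeas: "nu \<in> borel_measurable borel"
    and conv: "weak_conv_m (\<lambda>k. distr (M k) borel (\<lambda>s. sqrt (real k) * (X k s - z))) G"
    and rd: "real_distribution G" and cont: "\<And>x. isCont (cdf G) x"
    and deriv: "(nu has_real_derivative d) (at z)"
    and eta: "\<eta> > 0"
  shows "(\<lambda>k. measure (M k) {s\<in>space (M k). \<eta> < \<bar>sqrt (real k) * (nu (X k s) - nu z - d * (X k s - z))\<bar>}) \<longlonglongrightarrow> 0"
proof (rule tendstoI)
  note [measurable] = Xm numeas
  fix \<gamma> :: real assume \<gamma>: "\<gamma> > 0"
  interpret G: real_distribution G by fact
  define Fk where "Fk k t = measure (M k) {s\<in>space (M k). sqrt (real k) * (X k s - z) \<le> t}" for k t
  have Fconv: "(\<lambda>k. Fk k t) \<longlonglongrightarrow> cdf G t" for t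
    using conv cont[of t] unfolding weak_conv_m_def weak_conv_def Fk_def
    by (simp add: cdf_distr)
  have "eventually (\<lambda>t. cdf G t < \<gamma>/4) at_bot"
    using G.cdf_lim_at_bot \<gamma> by (intro order_tendstoD) auto
  then obtain N1 where N1: "\<And>t. t \<le> N1 \<Longrightarrow> cdf G t < \<gamma>/4"
    unfolding eventually_at_bot_linorder by auto
  have "eventually (\<lambda>t. cdf G t > 1 - \<gamma>/4) at_top"
    using G.cdf_lim_at_top_prob \<gamma> by (intro order_tendstoD) auto
  then obtain N2 where N2: "\<And>t. t \<ge> N2 \<Longrightarrow> cdf G t > 1 - \<gamma>/4"
    unfolding eventually_at_top_linorder by auto
  define B where "B = max 1 (max (- N1) N2)"
  have B: "B > 0" "cdf G (-B) < \<gamma>/4" "cdf G B > 1 - \<gamma>/4"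
    using N1[of "-B"] N2[of B] by (auto simp: B_def)
  have ev1: "eventually (\<lambda>k. Fk k (-B) < \<gamma>/2) sequentially"
    using Fconv[of "-B"] B(2) G.cdf_nonneg[of "-B"] \<gamma> by (intro order_tendstoD) auto
  have ev2: "eventually (\<lambda>k. Fk k B > 1 - \<gamma>/2) sequentially"
    using Fconv[of "B"] B(3) \<gamma> by (intro order_tendstoD) auto
  define \<theta> where "\<theta> = \<eta> / (2 * B)"
  have th: "\<theta> > 0" using eta B by (simp add: \<theta>_def)
  obtain \<delta> where \<delta>: "\<delta> > 0" "\<And>y. \<bar>y - z\<bar> < \<delta> \<Longrightarrow> \<bar>nu y - nu z - d * (y - z)\<bar> \<le> \<theta> * \<bar>y - z\<bar>"
    using deriv_approx[OF deriv th] by blast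
  obtain N :: nat where N: "real N > (B/\<delta>)\<^sup>2" using reals_Archimedean2 by blast
  have ev3: "eventually (\<lambda>k. sqrt (real k) > B / \<delta>) sequentially"
    unfolding eventually_sequentially
  proof (intro exI allI impI)
    fix k assume "N \<le> k"
    then have "real k > (B/\<delta>)\<^sup>2" using N by linarith
    then have "sqrt (real k) > sqrt ((B/\<delta>)\<^sup>2)" by (rule real_sqrt_less_mono)
    then show "sqrt (real k) > B / \<delta>" using B \<delta> by simp
  qed
  show "eventually (\<lambda>k. dist (measure (M k) {s\<in>space (M k). \<eta> < \<bar>sqrt (real k) * (nu (X k s) - nu z - d * (X k s - z))\<bar>}) 0 < \<gamma>) sequentially"
    using ev1 ev2 ev3
  proof eventually_elim
    case (elim k)
    interpret P: prob_space "M k" by (rule prob)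
    define q where "q = sqrt (real k)"
    have q: "q > B / \<delta>" using elim(3) by (simp add: q_def)
    have qpos: "q > 0" using q B \<delta> by (smt (verit) divide_pos_pos)
    have Bq: "B < \<delta> * q" using q \<delta> by (simp add: field_simps)
    have sub: "{s\<in>space (M k). \<eta> < \<bar>q * (nu (X k s) - nu z - d * (X k s - z))\<bar>}
        \<subseteq> {s\<in>space (M k). q * (X k s - z) \<le> -B} \<union> (space (M k) - {s\<in>space (M k). q * (X k s - z) \<le> B})"
    proof (rule subsetI, rule ccontr)
      fix s assume s: "s \<in> {s\<in>space (M k). \<eta> < \<bar>q * (nu (X k s) - nu z - d * (X k s - z))\<bar>}"
        and ns: "s \<notin> {s\<in>space (M k). q * (X k s - z) \<le> -B} \<union> (space (M k) - {s\<in>space (M k). q * (X k s - z) \<le> B})"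
      define u where "u = X k s - z"
      define r where "r = nu (X k s) - nu z - d * (X k s - z)"
      have W: "\<bar>q * u\<bar> \<le> B" using s ns by (auto simp: u_def)
      have qu: "q * \<bar>u\<bar> \<le> B" using W qpos by (simp add: abs_mult)
      have "q * \<bar>u\<bar> < q * \<delta>" using qu Bq by (simp add: mult.commute)
      then have "\<bar>u\<bar> < \<delta>" using qpos by simp
      then have r: "\<bar>r\<bar> \<le> \<theta> * \<bar>u\<bar>" using \<delta>(2) by (simp add: r_def u_def)
      have "\<bar>q * r\<bar> = q * \<bar>r\<bar>" using qpos by (simp add: abs_mult)
      also have "\<dots> \<le> q * (\<theta> * \<bar>u\<bar>)" using r qpos by (simp add: mult_left_mono)
      also have "\<dots> = \<theta> * (q * \<bar>u\<bar>)" by simp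
      also have "\<dots> \<le> \<theta> * B" using qu th by (simp add: mult_left_mono)
      also have "\<dots> = \<eta> / 2" using B by (simp add: \<theta>_def)
      finally have "\<bar>q * r\<bar> < \<eta>" using eta by simp
      then show False using s by (simp add: r_def)
    qed
    have "measure (M k) {s\<in>space (M k). \<eta> < \<bar>q * (nu (X k s) - nu z - d * (X k s - z))\<bar>}
        \<le> measure (M k) {s\<in>space (M k). q * (X k s - z) \<le> -B}
          + measure (M k) (space (M k) - {s\<in>space (M k). q * (X k s - z) \<le> B})"
      by (rule meas_cover2[OF prob _ _ _ sub]) auto
    also have "\<dots> = Fk k (-B) + (1 - Fk k B)"
      unfolding Fk_def q_def by (subst P.prob_compl) auto
    finally have "measure (M k) {s\<in>space (M k). \<eta> < \<bar>q * (nu (X k s) - nu z - d * (X k s - z))\<bar>} < \<gamma>"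
      using elim by linarith
    then show ?case by (simp add: q_def)
  qed
qed


lemma sum_ind: "(\<Sum>j\<in>(UNIV::'n::finite set). (if j = i then 1 else 0) * (f j::real)) = f i"
proof -
  have "(\<Sum>j\<in>(UNIV::'n set). (if j = i then 1 else 0) * f j) = (\<Sum>j\<in>UNIV. if j = i then f j else 0)"
    by (rule sum.cong) auto
  then show ?thesis by simp
qed
lemma dsum_ind: "(\<Sum>a\<in>(UNIV::'n::finite set). \<Sum>b\<in>UNIV. (if a = i then 1 else 0) * (if b = i then 1 else 0) * (if a = b then v a else 0)) = (v i::real)"
proof -
  have "(\<Sum>b\<in>UNIV. (if a = i then 1 else 0) * (if b = i then 1 else 0) * (if a = b then v a else 0)) = (if a = i then v i else 0)" for a :: 'n
  proof (cases "a = i")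
    case True
    have "(\<Sum>b\<in>(UNIV::'n set). (if a = i then 1 else 0) * (if b = i then 1 else 0) * (if a = b then v a else 0)) = (\<Sum>b\<in>UNIV. if b = i then v i else 0)"
      by (rule sum.cong) (auto simp: True)
    then show ?thesis using True by simp
  qed simp
  then show ?thesis by simp
qed

lemma sum_small:
  fixes M :: "nat \<Rightarrow> 'a measure" and R :: "'n::finite \<Rightarrow> nat \<Rightarrow> 'a \<Rightarrow> real"
  assumes prob: "\<And>k. prob_space (M k)"
    and Rm: "\<And>i k. R i k \<in> borel_measurable (M k)"
    and small: "\<And>i \<eta>. \<eta> > 0 \<Longrightarrow> (\<lambda>k. measure (M k) {s\<in>space (M k). \<eta> < \<bar>R i k s\<bar>}) \<longlonglongrightarrow> 0"
    and e: "e > 0"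
  shows "(\<lambda>k. measure (M k) {s\<in>space (M k). e < \<bar>\<Sum>i\<in>UNIV. c i * R i k s\<bar>}) \<longlonglongrightarrow> 0"
proof -
  note [measurable] = Rm
  define C where "C = (\<Sum>i\<in>UNIV. \<bar>c i\<bar>) + 1"
  have C: "C > 0" unfolding C_def by (smt (verit) sum_nonneg abs_ge_zero)
  define \<eta> where "\<eta> = e / C"
  have eta: "\<eta> > 0" using e C by (simp add: \<eta>_def)
  have bound: "measure (M k) {s\<in>space (M k). e < \<bar>\<Sum>i\<in>UNIV. c i * R i k s\<bar>}
      \<le> (\<Sum>i\<in>UNIV. measure (M k) {s\<in>space (M k). \<eta> < \<bar>R i k s\<bar>})" for k
  proof -
    interpret P: prob_space "M k" by (rule prob)
    have sub: "{s\<in>space (M k). e < \<bar>\<Sum>i\<in>UNIV. c i * R i k s\<bar>} \<subseteq> (\<Union>i\<in>UNIV. {s\<in>space (M k). \<eta> < \<bar>R i k s\<bar>})"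
    proof (rule subsetI, rule ccontr)
      fix s assume s: "s \<in> {s\<in>space (M k). e < \<bar>\<Sum>i\<in>UNIV. c i * R i k s\<bar>}"
        and ns: "s \<notin> (\<Union>i\<in>UNIV. {s\<in>space (M k). \<eta> < \<bar>R i k s\<bar>})"
      have le: "\<bar>R i k s\<bar> \<le> \<eta>" for i
      proof -
        have "\<not> \<eta> < \<bar>R i k s\<bar>" using s ns by auto
        then show ?thesis by simp
      qed
      have "\<bar>\<Sum>i\<in>UNIV. c i * R i k s\<bar> \<le> (\<Sum>i\<in>UNIV. \<bar>c i * R i k s\<bar>)" by (rule sum_abs)
      also have "\<dots> \<le> (\<Sum>i\<in>UNIV. \<bar>c i\<bar> * \<eta>)"
        by (intro sum_mono) (simp add: abs_mult mult_left_mono le)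
      also have "\<dots> = (C - 1) * \<eta>" by (simp add: C_def sum_distrib_right)
      also have "\<dots> < C * \<eta>" using eta by (simp add: algebra_simps)
      also have "\<dots> = e" using C by (simp add: \<eta>_def)
      finally show False using s by simp
    qed
    have "measure (M k) {s\<in>space (M k). e < \<bar>\<Sum>i\<in>UNIV. c i * R i k s\<bar>}
        \<le> measure (M k) (\<Union>i\<in>UNIV. {s\<in>space (M k). \<eta> < \<bar>R i k s\<bar>})"
      by (rule P.finite_measure_mono[OF sub]) measurable
    also have "\<dots> \<le> (\<Sum>i\<in>UNIV. measure (M k) {s\<in>space (M k). \<eta> < \<bar>R i k s\<bar>})"
      by (rule measure_UNION_le) auto
    finally show ?thesis .
  qed
  have lim: "(\<lambda>k. \<Sum>i\<in>UNIV. measure (M k) {s\<in>space (M k). \<eta> < \<bar>R i k s\<bar>}) \<longlonglongrightarrow> 0"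
    by (rule tendsto_null_sum) (rule small[OF eta])
  show ?thesis
    by (rule tendsto_sandwich[OF _ _ tendsto_const lim]) (auto intro!: always_eventually bound)
qed

lemma coord_meas:
  assumes "sets N = sets (Pi\<^sub>M UNIV (\<lambda>_. borel))"
  shows "(\<lambda>s. s i :: real) \<in> borel_measurable N"
  unfolding measurable_cong_sets[OF assms refl] by (rule measurable_component_singleton) simp

lemma transformed_asym:
  fixes As :: "'n::finite \<Rightarrow> real set" and chi sigma2 nu :: "real \<Rightarrow> real"
    and L :: "('n \<Rightarrow> real) \<Rightarrow> nat \<Rightarrow> ('n \<Rightarrow> real) measure"
  assumes L_prob: "\<And>A k. prob_space (L A k)"
    and L_sets: "\<And>A k. sets (L A k) = sets (Pi\<^sub>M UNIV (\<lambda>_. borel))"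
    and asym: "asym_normal As L (\<lambda>A i. chi (A i)) (\<lambda>A i j. if i = j then sigma2 (A i) else 0)"
    and nu_meas: "nu \<in> borel_measurable borel"
    and deriv: "\<And>A i. admissible As A \<Longrightarrow> (nu has_real_derivative 1 / sqrt (sigma2 (A i))) (at (chi (A i)))"
    and pos: "\<And>A i. admissible As A \<Longrightarrow> sigma2 (A i) > 0"
  shows "asym_normal As (transform_design nu L) (\<lambda>A i. nu (chi (A i))) (\<lambda>A i j. if i = j then 1 else 0)"
  unfolding asym_normal_def
proof (intro allI impI)
  fix A :: "'n \<Rightarrow> real" and c :: "'n \<Rightarrow> real"
  assume adm: "admissible As A"
  have crd[measurable]: "(\<lambda>s. s i) \<in> borel_measurable (L A k)" for i k
    by (rule coord_meas[OF L_sets])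
  note [measurable] = nu_meas
  have Tm: "(\<lambda>s i. nu (s i)) \<in> measurable (L A k) (Pi\<^sub>M UNIV (\<lambda>_. borel))" for k
    by (rule measurable_PiM_single') (auto intro: measurable_compose[OF crd nu_meas])
  have dd: "distr (transform_design nu L A k) borel (\<lambda>s. sqrt (real k) * (\<Sum>i\<in>UNIV. c i * (s i - nu (chi (A i)))))
     = distr (L A k) borel (\<lambda>s. sqrt (real k) * (\<Sum>i\<in>UNIV. c i * (nu (s i) - nu (chi (A i)))))" for k
    unfolding transform_design_def
    by (subst distr_distr[OF _ Tm]) (auto simp: comp_def)
  have vsum: "(\<Sum>i\<in>UNIV. \<Sum>j\<in>UNIV. c i * c j * (if i = j then 1 else 0)) = (\<Sum>i\<in>UNIV. (c i)\<^sup>2)"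
    by (simp add: power2_eq_square if_distrib cong: if_cong)
  have main: "weak_conv_m (\<lambda>k. distr (L A k) borel (\<lambda>s. sqrt (real k) * (\<Sum>i\<in>UNIV. c i * (nu (s i) - nu (chi (A i))))))
     (gauss (\<Sum>i\<in>UNIV. (c i)\<^sup>2))"
  proof (cases "c = (\<lambda>_. 0)")
    case True
    have "cdf (distr (L A k) borel (\<lambda>s. 0)) x = cdf (return borel 0) x" for k x
    proof -
      interpret P: prob_space "L A k" by (rule L_prob)
      have "cdf (distr (L A k) borel (\<lambda>s. 0)) x = measure (L A k) {s\<in>space (L A k). 0 \<le> x}"
        by (rule cdf_distr) simp
      also have "\<dots> = (if 0 \<le> x then 1 else 0)" by (simp add: P.prob_space)
      also have "\<dots> = cdf (return borel 0) x"
        unfolding cdf_def by (subst measure_return) auto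
      finally show ?thesis .
    qed
    then show ?thesis unfolding True weak_conv_m_def weak_conv_def
      by (simp add: gauss_def)
  next
    case False
    then obtain j where j: "c j \<noteq> 0" by auto
    have "(c j)\<^sup>2 \<le> (\<Sum>i\<in>UNIV. (c i)\<^sup>2)"
      by (rule member_le_sum) auto
    then have vpos: "(\<Sum>i\<in>UNIV. (c i)\<^sup>2) > 0" using j
      by (smt (verit) zero_less_power2)
    define d where "d i = 1 / sqrt (sigma2 (A i))" for i
    define z where "z i = chi (A i)" for i
    have sp: "sigma2 (A i) > 0" for i by (rule pos[OF adm])
    have d2: "(d i)\<^sup>2 * sigma2 (A i) = 1" for i
      using sp[of i] by (simp add: d_def power_divide)
    define f where "f k s = sqrt (real k) * (\<Sum>i\<in>UNIV. (c i * d i) * (s i - z i))" for k s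
    define g where "g k s = sqrt (real k) * (\<Sum>i\<in>UNIV. c i * (nu (s i) - nu (chi (A i))))" for k s
    define R where "R i k s = sqrt (real k) * (nu (s i) - nu (z i) - d i * (s i - z i))" for i k s
    have fm: "f k \<in> borel_measurable (L A k)" for k unfolding f_def by measurable
    have gm: "g k \<in> borel_measurable (L A k)" for k unfolding g_def by measurable
    have Rm: "R i k \<in> borel_measurable (L A k)" for i k unfolding R_def by measurable
    have conv_f: "weak_conv_m (\<lambda>k. distr (L A k) borel (f k)) (gauss (\<Sum>i\<in>UNIV. (c i)\<^sup>2))"
    proof -
      have "weak_conv_m (\<lambda>k. distr (L A k) borel (f k))
          (gauss (\<Sum>i\<in>UNIV. \<Sum>j\<in>UNIV. (c i * d i) * (c j * d j) * (if i = j then sigma2 (A i) else 0)))"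
        using asym[unfolded asym_normal_def, rule_format, OF adm, of "\<lambda>i. c i * d i"]
        unfolding f_def z_def by (simp add: mult.assoc)
      moreover have "(\<Sum>i\<in>UNIV. \<Sum>j\<in>UNIV. (c i * d i) * (c j * d j) * (if i = j then sigma2 (A i) else 0))
          = (\<Sum>i\<in>UNIV. (c i)\<^sup>2)"
      proof (rule sum.cong[OF refl])
        fix i :: 'n
        have "(\<Sum>j\<in>UNIV. (c i * d i) * (c j * d j) * (if i = j then sigma2 (A i) else 0))
            = (c i)\<^sup>2 * ((d i)\<^sup>2 * sigma2 (A i))"
          by (simp add: if_distrib power2_eq_square cong: if_cong)
        then show "(\<Sum>j\<in>UNIV. (c i * d i) * (c j * d j) * (if i = j then sigma2 (A i) else 0)) = (c i)\<^sup>2"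
          by (simp add: d2)
      qed
      ultimately show ?thesis by simp
    qed
    have Rsmall: "(\<lambda>k. measure (L A k) {s\<in>space (L A k). \<eta> < \<bar>R i k s\<bar>}) \<longlonglongrightarrow> 0"
      if eta: "\<eta> > 0" for i \<eta>
    proof -
      have "weak_conv_m (\<lambda>k. distr (L A k) borel (\<lambda>s. sqrt (real k) * (\<Sum>j\<in>UNIV. (if j = i then 1 else 0) * (s j - chi (A j)))))
          (gauss (\<Sum>a\<in>UNIV. \<Sum>b\<in>UNIV. (if a = i then 1 else 0) * (if b = i then 1 else 0) * (if a = b then sigma2 (A a) else 0)))"
        using asym[unfolded asym_normal_def, rule_format, OF adm, of "\<lambda>j. if j = i then 1 else 0"] .
      then have cv: "weak_conv_m (\<lambda>k. distr (L A k) borel (\<lambda>s. sqrt (real k) * (s i - z i))) (gauss (sigma2 (A i)))"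
        by (simp only: sum_ind dsum_ind z_def)
      show ?thesis
        unfolding R_def
        by (rule remainder_small[OF L_prob crd nu_meas cv gauss_rd[OF sp] gauss_cont[OF sp] _ eta])
           (simp add: d_def z_def deriv[OF adm])
    qed
    have small: "(\<lambda>k. measure (L A k) {s\<in>space (L A k). e < \<bar>g k s - f k s\<bar>}) \<longlonglongrightarrow> 0"
      if e: "e > 0" for e
    proof -
      have eq: "g k s - f k s = (\<Sum>i\<in>UNIV. c i * R i k s)" for k s
        unfolding f_def g_def R_def z_def
        by (simp add: sum_distrib_left sum_subtractf[symmetric] algebra_simps)
      show ?thesis unfolding eq
        by (rule sum_small[OF L_prob Rm Rsmall e])
    qed
    show ?thesis
      using slutsky[OF L_prob fm gm conv_f gauss_cont[OF vpos] small]
      unfolding g_def .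
  qed
  show "weak_conv_m (\<lambda>k. distr (transform_design nu L A k) borel (\<lambda>s. sqrt (real k) * (\<Sum>i\<in>UNIV. c i * (s i - nu (chi (A i))))))
     (gauss (\<Sum>i\<in>UNIV. \<Sum>j\<in>UNIV. c i * c j * (if i = j then 1 else 0)))"
    unfolding dd vsum by (rule main)
qed



lemma key_ineq:
  fixes nu g s :: "real \<Rightarrow> real" and I :: "real set"
  assumes I: "is_interval I" and xI: "x \<in> I" and yI: "y \<in> I" and yx: "y \<le> x"
    and deriv: "\<And>z. z \<in> I \<Longrightarrow> (nu has_real_derivative g z) (at z)"
    and gdef: "\<And>z. z \<in> I \<Longrightarrow> g z = 1 / sqrt (s z)"
    and spos: "\<And>z. z \<in> I \<Longrightarrow> s z > 0"
    and smono: "s y \<le> s x"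
    and conv: "convex_on I nu \<or> (convex_on I g \<and> convex_on I s)"
  shows "(x - y) * sqrt 2 / sqrt (s x + s y) \<le> nu x - nu y"
proof (cases "x = y")
  case True then show ?thesis by simp
next
  case False
  with yx have lt: "y < x" by simp
  have sub: "{y..x} \<subseteq> I"
  proof
    fix z assume "z \<in> {y..x}"
    then have "y \<le> z" "z \<le> x" by auto
    then show "z \<in> I" using I[unfolded is_interval_1] xI yI by blast
  qed
  have sx: "s x > 0" and sy: "s y > 0" using spos xI yI by auto
  have cI: "convex I" using I by (rule is_interval_convex)
  show ?thesis
  proof (cases "convex_on I nu")
    case True
    have "g y * (x - y) \<le> nu x - nu y"
      by (rule tangent_left[OF convex_on_subset[OF True sub] lt deriv[OF yI]]) simp
    moreover have "(x - y) * sqrt 2 / sqrt (s x + s y) \<le> g y * (x - y)"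
    proof -
      have "sqrt (2 * s y) \<le> sqrt (s x + s y)" using smono by simp
      then have a: "sqrt 2 * sqrt (s y) \<le> sqrt (s x + s y)" by (simp add: real_sqrt_mult)
      have "(x - y) * sqrt 2 / sqrt (s x + s y) \<le> (x - y) * sqrt 2 / (sqrt 2 * sqrt (s y))"
        by (rule divide_left_mono[OF a]) (use lt sy sx in auto)
      also have "\<dots> = g y * (x - y)" using gdef[OF yI] by simp
      finally show ?thesis .
    qed
    ultimately show ?thesis by linarith
  next
    case False
    with conv have cg: "convex_on I g" and cs: "convex_on I s" by auto
    define m where "m = (x + y) / 2"
    define h where "h = (x - y) / 2"
    have "m \<in> {y..x}" using lt by (simp add: m_def)
    then have mI: "m \<in> I" using sub by blast
    have hpos: "h \<ge> 0" using lt by (simp add: h_def)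
    define H where "H t = nu (m + t) - nu (m - t) - 2 * t * g m" for t
    have pmI: "m + t \<in> I" "m - t \<in> I" if "0 \<le> t" "t \<le> h" for t
    proof -
      have "m + t \<in> {y..x}" "m - t \<in> {y..x}" using that lt by (simp_all add: m_def h_def field_simps)
      then show "m + t \<in> I" "m - t \<in> I" using sub by blast+
    qed
    have "H 0 \<le> H h"
    proof (rule DERIV_nonneg_imp_nondecreasing[OF hpos])
      fix t assume t: "0 \<le> t" "t \<le> h"
      have l1: "((\<lambda>t. m + t) has_real_derivative 1) (at t)"
        by (auto intro!: derivative_eq_intros)
      have l2: "((\<lambda>t. m - t) has_real_derivative -1) (at t)"
        by (auto intro!: derivative_eq_intros)
      have d1: "((\<lambda>t. nu (m + t)) has_real_derivative g (m + t)) (at t)"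
        using DERIV_chain2[where f=nu and g="\<lambda>t. m + t" and x=t, OF deriv[OF pmI(1)[OF t]] l1]
        by simp
      have d2: "((\<lambda>t. nu (m - t)) has_real_derivative - g (m - t)) (at t)"
        using DERIV_chain2[where f=nu and g="\<lambda>t. m - t" and x=t, OF deriv[OF pmI(2)[OF t]] l2]
        by simp
      have d3: "((\<lambda>t. 2 * t * g m) has_real_derivative 2 * g m) (at t)"
        by (auto intro!: derivative_eq_intros)
      have "(H has_real_derivative g (m + t) - - g (m - t) - 2 * g m) (at t)"
        unfolding H_def by (intro DERIV_diff d1 d2 d3)
      then have dH: "(H has_real_derivative g (m + t) + g (m - t) - 2 * g m) (at t)" by simp
      have e: "(1 - 1/2) *\<^sub>R (m + t) + (1/2) *\<^sub>R (m - t) = m" by (simp add: field_simps)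
      have "g m \<le> (1 - 1/2) * g (m + t) + (1/2) * g (m - t)"
        using convex_onD[OF cg, of "1/2" "m + t" "m - t", unfolded e] pmI[OF t]
        by simp
      then have "g (m + t) + g (m - t) - 2 * g m \<ge> 0" by simp
      then show "\<exists>y. (H has_real_derivative y) (at t) \<and> y \<ge> 0" using dH by blast
    qed
    moreover have eqs: "m + h = x" "m - h = y" "2 * h = x - y" by (simp_all add: m_def h_def field_simps)
    moreover have "H h = nu x - nu y - (x - y) * g m"
      unfolding H_def by (simp only: eqs)
    moreover have "H 0 = 0" by (simp add: H_def)
    ultimately have main: "(x - y) * g m \<le> nu x - nu y" by linarith
    have e2: "(1 - 1/2) *\<^sub>R x + (1/2) *\<^sub>R y = m" by (simp add: m_def)
    have "s m \<le> (1 - 1/2) * s x + (1/2) * s y"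
      using convex_onD[OF cs, of "1/2" x y, unfolded e2] xI yI by simp
    then have smle: "s m \<le> (s x + s y) / 2" by simp
    have smpos: "s m > 0" using spos[OF mI] .
    have "sqrt 2 / sqrt (s x + s y) = 1 / sqrt ((s x + s y) / 2)"
      by (simp add: real_sqrt_divide)
    also have "\<dots> \<le> 1 / sqrt (s m)"
      using smle smpos by (intro divide_left_mono) auto
    also have "\<dots> = g m" using gdef[OF mI] by simp
    finally have "sqrt 2 / sqrt (s x + s y) \<le> g m" .
    then have "(x - y) * (sqrt 2 / sqrt (s x + s y)) \<le> (x - y) * g m"
      using lt by (intro mult_left_mono) auto
    then show ?thesis using main by simp
  qed
qed



theorem theorem3:
  fixes As :: "'n::finite \<Rightarrow> real set"
    and chi sigma2 nu :: "real \<Rightarrow> real"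
    and L :: "('n \<Rightarrow> real) \<Rightarrow> nat \<Rightarrow> ('n \<Rightarrow> real) measure"
  defines "Acts \<equiv> (\<Union>i. As i)"
  defines "I \<equiv> chi ` Acts"
  defines "chi_inv \<equiv> the_inv_into Acts chi"
  assumes compact: "\<And>i. compact (As i)"
    and nonempty: "\<And>i. As i \<noteq> {}"
    and chi_cont: "continuous_on Acts chi"
    and chi_inj: "inj_on chi Acts"
    and sigma2_pos: "\<And>a. a \<in> Acts \<Longrightarrow> sigma2 a > 0"
    and sigma2_mono: "\<And>a a'. a \<in> Acts \<Longrightarrow> a' \<in> Acts \<Longrightarrow> chi a \<le> chi a' \<Longrightarrow> sigma2 a \<le> sigma2 a'"
    and I_interval: "is_interval I"
    and L_prob: "\<And>A k. prob_space (L A k)"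
    and L_sets: "\<And>A k. sets (L A k) = sets (Pi\<^sub>M UNIV (\<lambda>_. borel))"
    and asym: "asym_normal As L (\<lambda>A i. chi (A i)) (\<lambda>A i j. if i = j then sigma2 (A i) else 0)"
    and IC: "design_IC As chi L"
    and nu_meas: "nu \<in> borel_measurable borel"
    and nu_deriv: "\<And>z. z \<in> I \<Longrightarrow> (nu has_real_derivative 1 / sqrt (sigma2 (chi_inv z))) (at z)"
    and convexity: "convex_on I nu \<or>
       (convex_on I (\<lambda>z. 1 / sqrt (sigma2 (chi_inv z))) \<and> convex_on I (\<lambda>z. sigma2 (chi_inv z)))"
  shows "design_IC As chi (transform_design nu L) \<and>
    (\<forall>k::nat. k > 0 \<longrightarrow> (\<forall>a b. a \<in> Acts \<longrightarrow> b \<in> Acts \<longrightarrow> chi a \<ge> chi b \<longrightarrow>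
       Phi (sqrt (real k / 2) * (nu (chi a) - nu (chi b)))
         \<ge> Phi (sqrt (real k) * (chi a - chi b) / sqrt (sigma2 a + sigma2 b))))"
proof -
  have inv: "chi_inv (chi a) = a" if "a \<in> Acts" for a
    unfolding chi_inv_def using the_inv_into_f_f[OF chi_inj that] .
  have admA: "A i \<in> Acts" if "admissible As A" for A i
    using that unfolding admissible_def Acts_def by blast
  have chiI: "chi a \<in> I" if "a \<in> Acts" for a
    unfolding I_def using that by blast
  have inv_in: "chi_inv z \<in> Acts" if "z \<in> I" for z
    unfolding chi_inv_def using the_inv_into_into[OF chi_inj, of z Acts] that by (simp add: I_def)
  have deriv': "(nu has_real_derivative 1 / sqrt (sigma2 (A i))) (at (chi (A i)))"
    if adm: "admissible As A" for A i
    using nu_deriv[OF chiI[OF admA[OF adm]]] inv[OF admA[OF adm]] by simp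
  have pos': "sigma2 (A i) > 0" if adm: "admissible As A" for A i
    using sigma2_pos[OF admA[OF adm]] .
  have asym': "asym_normal As (transform_design nu L) (\<lambda>A i. nu (chi (A i))) (\<lambda>A i j. if i = j then 1 else 0)"
    by (rule transformed_asym[where ?sigma2.0 = sigma2 and ?L = L and ?As = As and ?chi = chi and ?nu = nu]) (simp_all add: L_prob L_sets asym nu_meas deriv' pos')
  have nu_mono: "nu z1 \<le> nu z2" if z: "z1 \<in> I" "z2 \<in> I" "z1 \<le> z2" for z1 z2
  proof (rule DERIV_nonneg_imp_nondecreasing[OF z(3)])
    fix t assume t: "z1 \<le> t" "t \<le> z2"
    have "t \<in> I" using I_interval[unfolded is_interval_1] z t by blast
    then have "(nu has_real_derivative 1 / sqrt (sigma2 (chi_inv t))) (at t)" by (rule nu_deriv)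
    moreover have "1 / sqrt (sigma2 (chi_inv t)) \<ge> 0"
      using sigma2_pos[OF inv_in[OF \<open>t \<in> I\<close>]] by simp
    ultimately show "\<exists>y. (nu has_real_derivative y) (at t) \<and> y \<ge> 0" by blast
  qed
  have IC': "design_IC As chi (transform_design nu L)"
    unfolding design_IC_def
  proof (intro exI conjI allI impI ballI)
    show "asym_normal As (transform_design nu L) (\<lambda>A i. nu (chi (A i))) (\<lambda>A i j. if i = j then 1 else 0)"
      by (rule asym')
  next
    fix k :: nat and i j :: 'n and A :: "'n \<Rightarrow> real" and a0 \<alpha>
    assume k: "k > 0" and ij: "i \<noteq> j" and adm: "admissible As A"
      and nat: "natural_action As chi i a0" and al: "\<alpha> \<in> As i"
    have a0: "a0 \<in> As i" "chi \<alpha> \<le> chi a0" using nat al unfolding natural_action_def by auto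
    have "\<alpha> \<in> Acts" "a0 \<in> Acts" using al a0 unfolding Acts_def by auto
    then have "nu (chi \<alpha>) \<le> nu (chi a0)" using nu_mono chiI a0(2) by blast
    then have "sqrt (real k) * (nu (chi \<alpha>) - nu (chi (A j))) / sqrt 2
        \<le> sqrt (real k) * (nu (chi a0) - nu (chi (A j))) / sqrt 2"
      by (intro divide_right_mono mult_left_mono) auto
    then show "approx_win k (\<lambda>l. nu (chi ((A(i := \<alpha>)) l))) (\<lambda>l m. if l = m then 1 else 0) i j
        \<le> approx_win k (\<lambda>l. nu (chi ((A(i := a0)) l))) (\<lambda>l m. if l = m then 1 else 0) i j"
      unfolding approx_win_def using ij by (simp add: Phi_mono)
  qed
  have part2: "Phi (sqrt (real k / 2) * (nu (chi a) - nu (chi b)))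
         \<ge> Phi (sqrt (real k) * (chi a - chi b) / sqrt (sigma2 a + sigma2 b))"
    if k: "k > 0" and a: "a \<in> Acts" and b: "b \<in> Acts" and ab: "chi a \<ge> chi b" for k :: nat and a b
  proof -
    define s where "s z = sigma2 (chi_inv z)" for z
    have K: "(chi a - chi b) * sqrt 2 / sqrt (s (chi a) + s (chi b)) \<le> nu (chi a) - nu (chi b)"
    proof (rule key_ineq[OF I_interval chiI[OF a] chiI[OF b] ab])
      show "\<And>z. z \<in> I \<Longrightarrow> (nu has_real_derivative 1 / sqrt (sigma2 (chi_inv z))) (at z)"
        by (rule nu_deriv)
      show "\<And>z. z \<in> I \<Longrightarrow> 1 / sqrt (sigma2 (chi_inv z)) = 1 / sqrt (s z)"
        by (simp add: s_def)
      show "\<And>z. z \<in> I \<Longrightarrow> s z > 0"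
        unfolding s_def using sigma2_pos inv_in by blast
      show "s (chi b) \<le> s (chi a)"
        unfolding s_def using inv a b sigma2_mono ab by simp
      show "convex_on I nu \<or> (convex_on I (\<lambda>z. 1 / sqrt (sigma2 (chi_inv z))) \<and> convex_on I s)"
        using convexity unfolding s_def by simp
    qed
    then have K': "(chi a - chi b) * sqrt 2 / sqrt (sigma2 a + sigma2 b) \<le> nu (chi a) - nu (chi b)"
      unfolding s_def using inv a b by simp
    have "sqrt (real k) * (chi a - chi b) / sqrt (sigma2 a + sigma2 b)
        = sqrt (real k / 2) * ((chi a - chi b) * sqrt 2 / sqrt (sigma2 a + sigma2 b))"
      by (simp add: real_sqrt_divide)
    also have "\<dots> \<le> sqrt (real k / 2) * (nu (chi a) - nu (chi b))"
      using K' by (intro mult_left_mono) auto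
    finally show ?thesis by (rule Phi_mono)
  qed
  show ?thesis using IC' part2 by blast
qed


end
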